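(* Let $k$ be an odd integer with $k\ge 5$, let $D$ be a strong $k$-quasi-transitive digraph with $\mathrm{diam}(D)\ge k+2$, let $u,v\in V(D)$ with $d(u,v)=k+2$, and let $P=x_0x_1\ldots x_{k+2}$ be a shortest $(u,v)$-path with $x_0=u$, $x_{k+2}=v$. Let $I=\{x\in V(D)\setminus V(P): x\Rightarrow V(P)\}$, $W=\{x\in V(D)\setminus V(P): V(P)\Rightarrow x\}$ and $B=V(D)\setminus(V(P)\cup I\cup W)$. If $D[V(P)]$ is a semicomplete digraph, then for any $x\in B$, either $x$ is adjacent to every vertex of $V(P)$, or there exist $x_t,x_s\in V(P)$ with $4\le t+1<s\le k-1$ such that $\{x_s,x_{s+1},\ldots,x_{k+2}\}\mapsto x\mapsto\{x_0,x_1,\ldots,x_t\}$.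
   Context: All digraphs are finite, without loops or multiple arcs (opposite arcs allowed). $x\rightarrow y$ means $xy\in A(D)$; $x,y$ are adjacent if $x\rightarrow y$ or $y\rightarrow x$. For disjoint vertex sets $X,Y$ (singletons identified with vertices): $X\rightarrow Y$ means every vertex of $X$ dominates every vertex of $Y$; $X\Rightarrow Y$ means there is no arc from $Y$ to $X$; $X\mapsto Y$ means both $X\rightarrow Y$ and $X\Rightarrow Y$. For $k\ge 2$, $D$ is $k$-quasi-transitive if for every path $x_0x_1\ldots x_k$ of length $k$, $x_0$ and $x_k$ are adjacent. $d(x,y)$ is the length of a shortest $(x,y)$-path, $\mathrm{diam}(D)=\max_{x,y}d(x,y)$. $D[S]$ is the induced subdigraph; a semicomplete digraph is one in which every two distinct vertices are adjacent. *)

theory Defs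
  imports Main
begin

definition digraph :: "'a set \<Rightarrow> ('a \<Rightarrow> 'a \<Rightarrow> bool) \<Rightarrow> bool" where
  "digraph V A \<longleftrightarrow> finite V \<and> (\<forall>x y. A x y \<longrightarrow> x \<in> V \<and> y \<in> V) \<and> (\<forall>x. \<not> A x x)"

definition adjacent :: "('a \<Rightarrow> 'a \<Rightarrow> bool) \<Rightarrow> 'a \<Rightarrow> 'a \<Rightarrow> bool" where
  "adjacent A x y \<longleftrightarrow> A x y \<or> A y x"

text \<open>A (directed) path is a nonempty list of distinct vertices of V with
  consecutive arcs; its length is the number of arcs, i.e. length - 1.\<close>

definition is_path :: "'a set \<Rightarrow> ('a \<Rightarrow> 'a \<Rightarrow> bool) \<Rightarrow> 'a list \<Rightarrow> bool" where
  "is_path V A p \<longleftrightarrow> p \<noteq> [] \<and> distinct p \<and> set p \<subseteq> V \<and>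
     (\<forall>i. Suc i < length p \<longrightarrow> A (p ! i) (p ! Suc i))"

definition is_path_from_to :: "'a set \<Rightarrow> ('a \<Rightarrow> 'a \<Rightarrow> bool) \<Rightarrow> 'a list \<Rightarrow> 'a \<Rightarrow> 'a \<Rightarrow> bool" where
  "is_path_from_to V A p x y \<longleftrightarrow> is_path V A p \<and> hd p = x \<and> last p = y"

definition k_quasi_transitive :: "nat \<Rightarrow> 'a set \<Rightarrow> ('a \<Rightarrow> 'a \<Rightarrow> bool) \<Rightarrow> bool" where
  "k_quasi_transitive k V A \<longleftrightarrow>
     (\<forall>p. is_path V A p \<and> length p = k + 1 \<longrightarrow> adjacent A (hd p) (last p))"

definition strong :: "'a set \<Rightarrow> ('a \<Rightarrow> 'a \<Rightarrow> bool) \<Rightarrow> bool" where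
  "strong V A \<longleftrightarrow> (\<forall>x\<in>V. \<forall>y\<in>V. \<exists>p. is_path_from_to V A p x y)"

text \<open>d(x,y): length of a shortest (x,y)-path (only meaningful if one exists).\<close>

definition dist :: "'a set \<Rightarrow> ('a \<Rightarrow> 'a \<Rightarrow> bool) \<Rightarrow> 'a \<Rightarrow> 'a \<Rightarrow> nat" where
  "dist V A x y = (LEAST n. \<exists>p. is_path_from_to V A p x y \<and> length p = n + 1)"

definition diam :: "'a set \<Rightarrow> ('a \<Rightarrow> 'a \<Rightarrow> bool) \<Rightarrow> nat" where
  "diam V A = Max {dist V A x y | x y. x \<in> V \<and> y \<in> V}"

definition semicomplete_on :: "('a \<Rightarrow> 'a \<Rightarrow> bool) \<Rightarrow> 'a set \<Rightarrow> bool" where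
  "semicomplete_on A S \<longleftrightarrow> (\<forall>x\<in>S. \<forall>y\<in>S. x \<noteq> y \<longrightarrow> adjacent A x y)"

text \<open>X \<Rightarrow> Y: no arc from Y to X.  X \<mapsto> Y: X \<rightarrow> Y and X \<Rightarrow> Y.\<close>

definition no_back :: "('a \<Rightarrow> 'a \<Rightarrow> bool) \<Rightarrow> 'a set \<Rightarrow> 'a set \<Rightarrow> bool" where
  "no_back A X Y \<longleftrightarrow> (\<forall>x\<in>X. \<forall>y\<in>Y. \<not> A y x)"

definition dominates :: "('a \<Rightarrow> 'a \<Rightarrow> bool) \<Rightarrow> 'a set \<Rightarrow> 'a set \<Rightarrow> bool" where
  "dominates A X Y \<longleftrightarrow> (\<forall>x\<in>X. \<forall>y\<in>Y. A x y)"

definition strictly_dominates :: "('a \<Rightarrow> 'a \<Rightarrow> bool) \<Rightarrow> 'a set \<Rightarrow> 'a set \<Rightarrow> bool" where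
  "strictly_dominates A X Y \<longleftrightarrow> dominates A X Y \<and> no_back A X Y"

end

theory Submission
  imports Defs
begin


lemma is_path_succ: "is_path V A p \<longleftrightarrow> p \<noteq> [] \<and> distinct p \<and> set p \<subseteq> V \<and> successively A p"
  unfolding is_path_def successively_conv_nth by simp

lemma succ_upt: "successively (\<lambda>i j. j = Suc i) [a..<b]"
  unfolding successively_conv_nth by simp

lemma dist_le: assumes "is_path_from_to V A q u v" shows "dist V A u v + 1 \<le> length q"
proof -
  have ne: "q \<noteq> []" using assms by (simp add: is_path_from_to_def is_path_def)
  hence "\<exists>p. is_path_from_to V A p u v \<and> length p = (length q - 1) + 1" using assms by auto
  hence "dist V A u v \<le> length q - 1" unfolding dist_def by (rule Least_le)
  thus ?thesis using ne by (cases q) auto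
qed

lemma path_app: assumes "is_path V A Q1" "is_path V A Q2" "set Q1 \<inter> set Q2 = {}" "A (last Q1) (hd Q2)"
  shows "is_path V A (Q1 @ Q2)"
  using assms unfolding is_path_succ successively_append_iff by auto

lemma path_cons: assumes "is_path V A Q" "x \<in> V" "x \<notin> set Q" "A x (hd Q)"
  shows "is_path V A (x # Q)"
  using assms unfolding is_path_succ successively_Cons by auto

lemma path_snoc: assumes "is_path V A Q" "x \<in> V" "x \<notin> set Q" "A (last Q) x"
  shows "is_path V A (Q @ [x])"
  using assms unfolding is_path_succ successively_append_iff by auto

lemma bk_list: assumes "b < a" "a \<le> b+4" "a \<le> k+2" "k \<ge> 5"
  shows "\<exists>L. L \<noteq> [] \<and> distinct L \<and> set L \<subseteq> {..k+2} \<and>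
     successively (\<lambda>i j. j = Suc i \<or> j+2 \<le> i) L \<and> length L = k \<and> hd L = a \<and> last L = b"
proof -
  define c where "c = min b (4+b-a)"
  define e where "e = k+c+a-b-2"
  have c1: "c \<le> b" "c + a \<le> b + 4" "c = b \<or> c + a = 4 + b" unfolding c_def using assms by auto
  have e1: "a \<le> e" "e \<le> k+2" "c + 2 \<le> e" unfolding e_def using assms c1 by auto
  define L where "L = [a..<e+1] @ [c..<b+1]"
  have s1: "successively (\<lambda>i j. j = Suc i \<or> j+2 \<le> i) [a..<e+1]"
    using successively_mono[OF succ_upt[of a "e+1"], of "\<lambda>i j. j = Suc i \<or> j+2 \<le> i"] by blast
  have s2: "successively (\<lambda>i j. j = Suc i \<or> j+2 \<le> i) [c..<b+1]"
    using successively_mono[OF succ_upt[of c "b+1"], of "\<lambda>i j. j = Suc i \<or> j+2 \<le> i"] by blast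
  have j1: "hd [c..<b+1] = c" using c1 by (simp add: hd_upt del: upt_Suc)
  have j2: "last [a..<e+1] = e" using e1 by (simp add: last_upt del: upt_Suc)
  have "successively (\<lambda>i j. j = Suc i \<or> j+2 \<le> i) L"
    unfolding L_def successively_append_iff using s1 s2 j1 j2 e1 by simp
  moreover have "length L = k" unfolding L_def e_def using assms c1 by auto
  moreover have "distinct L" unfolding L_def using assms by auto
  moreover have "set L \<subseteq> {..k+2}" unfolding L_def using assms e1 by auto
  moreover have "hd L = a" "last L = b" unfolding L_def using e1 c1 by (auto simp: hd_upt last_upt hd_append del: upt_Suc)
  ultimately show ?thesis using assms(4) by (intro exI[of _ L]) auto
qed

lemma fw_list: assumes "a + k - 1 \<le> k+2" "k \<ge> 5"
  shows "\<exists>L. L \<noteq> [] \<and> distinct L \<and> set L \<subseteq> {..k+2} \<and>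
     successively (\<lambda>i j. j = Suc i \<or> j+2 \<le> i) L \<and> length L = k \<and> hd L = a \<and> last L = a+k-1"
proof -
  define L where "L = [a..<a+k]"
  have "successively (\<lambda>i j. j = Suc i \<or> j+2 \<le> i) L"
    unfolding L_def
    using successively_mono[OF succ_upt[of a "a+k"], of "\<lambda>i j. j = Suc i \<or> j+2 \<le> i"] by auto
  moreover have "length L = k" "distinct L" "set L \<subseteq> {..k+2}" "hd L = a" "last L = a+k-1"
    unfolding L_def using assms by (auto simp: hd_upt last_upt)
  moreover have "L \<noteq> []" unfolding L_def using assms by auto
  ultimately show ?thesis by (intro exI[of _ L]) auto
qed



lemma comb:
  fixes In Out :: "nat \<Rightarrow> bool" and k :: nat
  assumes k5: "k \<ge> 5"
  and C0: "\<And>i j. i \<le> k+2 \<Longrightarrow> j \<le> k+2 \<Longrightarrow> In i \<Longrightarrow> Out j \<Longrightarrow> j \<le> i+2"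
  and F1: "\<And>a. a+k-1 \<le> k+2 \<Longrightarrow> Out a \<Longrightarrow> In (a+k-1) \<or> Out (a+k-1)"
  and F2: "\<And>b. b \<le> k+2 \<Longrightarrow> k-1 \<le> b \<Longrightarrow> In b \<Longrightarrow> In (b-(k-1)) \<or> Out (b-(k-1))"
  and B1: "\<And>a b. a \<le> k+2 \<Longrightarrow> b < a \<Longrightarrow> a \<le> b+4 \<Longrightarrow> Out a \<Longrightarrow> In b \<or> Out b"
  and B2: "\<And>a b. a \<le> k+2 \<Longrightarrow> b < a \<Longrightarrow> a \<le> b+4 \<Longrightarrow> In b \<Longrightarrow> In a \<or> Out a"
  and ne: "\<exists>i\<le>k+2. In i"
  shows "(\<forall>i\<le>k+2. In i \<or> Out i) \<or> (\<exists>t s. 4 \<le> t+1 \<and> t+1 < s \<and> s \<le> k-1 \<and>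
     (\<forall>l. s \<le> l \<and> l \<le> k+2 \<longrightarrow> In l \<and> \<not> Out l) \<and> (\<forall>l\<le>t. Out l \<and> \<not> In l))"
proof -
  define Adj where "Adj i = (In i \<or> Out i)" for i
  have Up: "\<forall>j. h < j \<and> j \<le> k+2 \<longrightarrow> In j \<and> \<not> Out j"
    if h1: "h < k+2" and h2: "\<not> Adj h" and h3: "Adj (h+1)" for h
  proof -
    have nO1: "\<not> Out (h+1)" using B1[of "h+1" h] h1 h2 unfolding Adj_def by auto
    hence I1: "In (h+1)" using h3 unfolding Adj_def by auto
    have noOut: "\<not> Out j" if "h < j" "j \<le> k+2" for j
    proof (cases "j \<le> h+4")
      case True thus ?thesis using B1[of j h] that h2 unfolding Adj_def by auto
    next
      case False thus ?thesis using C0[of "h+1" j] that I1 h1 by auto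
    qed
    have "\<forall>d. h+1+d \<le> k+2 \<longrightarrow> In (h+1+d)"
    proof
      fix d show "h+1+d \<le> k+2 \<longrightarrow> In (h+1+d)"
      proof (induction d)
        case 0 then show ?case using I1 by simp
      next
        case (Suc d)
        show ?case
        proof
          assume a: "h + 1 + Suc d \<le> k + 2"
          hence "In (h+1+d)" using Suc by simp
          hence "In (h+1+Suc d) \<or> Out (h+1+Suc d)" using B2[of "h+1+Suc d" "h+1+d"] a by simp
          thus "In (h+1+Suc d)" using noOut[of "h+1+Suc d"] a by auto
        qed
      qed
    qed
    note allD = this
    show ?thesis
    proof (intro allI impI)
      fix j assume jj: "h < j \<and> j \<le> k+2"
      hence e: "h+1+(j-h-1) = j" by simp
      have "In (h+1+(j-h-1))" using allD jj e by metis
      thus "In j \<and> \<not> Out j" using e noOut jj by simp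
    qed
  qed
  have Down: "\<forall>j<h. Out j \<and> \<not> In j"
    if h1: "h \<le> k+2" and h0: "1 \<le> h" and h2: "\<not> Adj h" and h3: "Adj (h-1)" for h
  proof -
    have nI1: "\<not> In (h-1)" using B2[of h "h-1"] h1 h0 h2 unfolding Adj_def by auto
    hence O1: "Out (h-1)" using h3 unfolding Adj_def by auto
    have noIn: "\<not> In j" if "j < h" for j
    proof (cases "h \<le> j+4")
      case True thus ?thesis using B2[of h j] that h1 h2 unfolding Adj_def by auto
    next
      case False
      show ?thesis
      proof
        assume "In j"
        then have "h-1 \<le> j+2" using C0[of j "h-1"] that O1 h1 by simp
        thus False using False by simp
      qed
    qed
    have "\<forall>d. d < h \<longrightarrow> Out (h-1-d)"
    proof
      fix d show "d < h \<longrightarrow> Out (h-1-d)"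
      proof (induction d)
        case 0 then show ?case using O1 by simp
      next
        case (Suc d)
        show ?case
        proof
          assume a: "Suc d < h"
          hence "Out (h-1-d)" using Suc by simp
          hence "In (h-1-Suc d) \<or> Out (h-1-Suc d)" using B1[of "h-1-d" "h-1-Suc d"] a h1 by simp
          thus "Out (h-1-Suc d)" using noIn[of "h-1-Suc d"] a by auto
        qed
      qed
    qed
    note allD = this
    show ?thesis
    proof (intro allI impI)
      fix j assume jj: "j < h"
      hence e: "h-1-(h-1-j) = j" by simp
      have "h-1-j < h" using jj by simp
      hence "Out (h-1-(h-1-j))" using allD by blast
      thus "Out j \<and> \<not> In j" using e noIn jj by simp
    qed
  qed
  have UpG: "\<forall>h. \<not> Adj h \<longrightarrow> h + Suc d \<le> k+2 \<longrightarrow> Adj (h + Suc d) \<longrightarrow>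
       (\<forall>j. h + Suc d \<le> j \<and> j \<le> k+2 \<longrightarrow> In j \<and> \<not> Out j)" for d
  proof (induction d)
    case 0
    show ?case
    proof (intro allI impI)
      fix h j assume a: "\<not> Adj h" "h + Suc 0 \<le> k+2" "Adj (h + Suc 0)" "h + Suc 0 \<le> j \<and> j \<le> k+2"
      have "h < k+2" "Adj (h+1)" using a by auto
      from Up[OF this(1) a(1) this(2)] a(4) show "In j \<and> \<not> Out j" by auto
    qed
  next
    case (Suc d)
    show ?case
    proof (intro allI impI)
      fix h j assume a: "\<not> Adj h" "h + Suc (Suc d) \<le> k + 2" "Adj (h + Suc (Suc d))"
        "h + Suc (Suc d) \<le> j \<and> j \<le> k + 2"
      show "In j \<and> \<not> Out j"
      proof (cases "Adj (h+1)")
        case True thus ?thesis using Up[of h] a by auto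
      next
        case False thus ?thesis using Suc[rule_format, of "h+1" j] a by auto
      qed
    qed
  qed
  show ?thesis
  proof (cases "\<forall>i\<le>k+2. Adj i")
    case True thus ?thesis unfolding Adj_def by auto
  next
    case False
    then obtain g where g: "g \<le> k+2" "\<not> Adj g" by auto
    define p where "p = (LEAST i. i \<le> k+2 \<and> \<not> Adj i)"
    define q where "q = (GREATEST i. i \<le> k+2 \<and> \<not> Adj i)"
    have p1: "p \<le> k+2 \<and> \<not> Adj p" using LeastI[of "\<lambda>i. i \<le> k+2 \<and> \<not> Adj i" g] g unfolding p_def by blast
    have p2: "Adj i" if "i < p" for i
      using not_less_Least[OF that[unfolded p_def]] p1 that by auto
    have q1: "q \<le> k+2 \<and> \<not> Adj q" using GreatestI_nat[of "\<lambda>i. i \<le> k+2 \<and> \<not> Adj i" g "k+2"] g unfolding q_def by blast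
    have q2: "Adj i" if "q < i" "i \<le> k+2" for i
      using Greatest_le_nat[of "\<lambda>i. i \<le> k+2 \<and> \<not> Adj i" i "k+2"] that unfolding q_def[symmetric] by auto
    have pq: "p \<le> q" using p2 q1 by (meson not_le)
    have mid: "\<not> Adj j" if "p \<le> j" "j \<le> q" for j
    proof
      assume aj: "Adj j"
      hence "p < j" "j < q" using that p1 q1 by (auto simp: order_le_less)
      then obtain d where "j = p + Suc d" using less_iff_Suc_add by auto
      thus False using UpG[of d, rule_format, of p q] aj p1 q1 \<open>j < q\<close> unfolding Adj_def by auto
    qed
    have low: "\<forall>l<p. Out l \<and> \<not> In l"
    proof (cases "p = 0")
      case True thus ?thesis by simp
    next
      case False thus ?thesis using Down[of p] p1 p2[of "p-1"] by auto
    qed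
    have high: "\<forall>l. q < l \<and> l \<le> k+2 \<longrightarrow> In l \<and> \<not> Out l"
    proof (cases "q = k+2")
      case True thus ?thesis by auto
    next
      case False thus ?thesis using Up[of q] q1 q2[of "q+1"] by auto
    qed
    have p4: "p \<ge> 4"
    proof (rule ccontr)
      assume "\<not> p \<ge> 4"
      hence p3: "p \<le> 3" by simp
      have b1: "p + k - 1 \<le> q"
      proof (rule ccontr)
        assume "\<not> p + k - 1 \<le> q"
        hence "In (p+k-1)" using high p3 by auto
        hence "Adj p" using F2[of "p+k-1"] p3 k5 unfolding Adj_def by auto
        thus False using p1 by simp
      qed
      show False
      proof (cases "p = 0")
        case False
        hence "Out 0" using low by auto
        hence "Adj (k-1)" using F1[of 0] k5 unfolding Adj_def by auto
        moreover have "p \<le> k-1" "k-1 \<le> q" using p3 b1 k5 by linarith+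
        ultimately show False using mid[of "k-1"] by blast
      next
        case True
        show False
        proof (cases "q = k+2")
          case True
          thus False using ne mid \<open>p = 0\<close> unfolding Adj_def by auto
        next
          case False
          hence "In (k+2)" using high q1 by auto
          hence "Adj 3" using F2[of "k+2"] k5 unfolding Adj_def by auto
          moreover have "p \<le> 3" "3 \<le> q" using \<open>p = 0\<close> b1 k5 by linarith+
          ultimately show False using mid[of 3] by blast
        qed
      qed
    qed
    have qk: "q \<le> k - 2"
    proof (rule ccontr)
      assume "\<not> q \<le> k-2"
      hence q3: "q \<ge> k-1" by simp
      have "\<not> Out (q-(k-1))"
        using F1[of "q-(k-1)"] q1 q3 k5 unfolding Adj_def by auto
      thus False using low p4 q1 q3 k5 by auto
    qed
    show ?thesis
      apply (rule disjI2)
      apply (rule exI[of _ "p-1"], rule exI[of _ "q+1"])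
      using p4 qk pq low high k5 by auto
  qed
qed

theorem lemma2p11:
  fixes V :: "'a set" and A :: "'a \<Rightarrow> 'a \<Rightarrow> bool" and k :: nat
    and u v :: 'a and P :: "'a list"
  assumes "odd k" and "k \<ge> 5"
    and "digraph V A" and "strong V A" and "k_quasi_transitive k V A"
    and "diam V A \<ge> k + 2"
    and "u \<in> V" and "v \<in> V" and "dist V A u v = k + 2"
    and "is_path_from_to V A P u v" and "length P = dist V A u v + 1"
    and "semicomplete_on A (set P)"
  shows "let I = {x \<in> V - set P. no_back A {x} (set P)};
             W = {x \<in> V - set P. no_back A (set P) {x}};
             B = V - (set P \<union> I \<union> W)
         in \<forall>x\<in>B. (\<forall>y\<in>set P. adjacent A x y) \<or>
              (\<exists>t s. 4 \<le> t + 1 \<and> t + 1 < s \<and> s \<le> k - 1 \<and>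
                 strictly_dominates A {P ! i | i. s \<le> i \<and> i \<le> k + 2} {x} \<and>
                 strictly_dominates A {x} {P ! i | i. i \<le> t})"
proof -
  note k5 = \<open>k \<ge> 5\<close>
  have pP: "is_path V A P" and huv: "hd P = u" "last P = v"
    using assms(10) by (auto simp: is_path_from_to_def)
  have len: "length P = k+3" using assms(9,11) by simp
  have PV: "set P \<subseteq> V" and dP: "distinct P" and sP: "successively A P"
    using pP by (auto simp: is_path_succ)
  have Pne: "P \<noteq> []" using len by auto
  have u0: "u = P!0" using huv hd_conv_nth[OF Pne] by simp
  have vn: "v = P!(k+2)" using huv last_conv_nth[OF Pne] len by simp
  have fwd: "A (P!i) (P!Suc i)" if "i < k+2" for i
    using successively_nth[OF sP, of i] that len by simp
  have inj: "(P!i = P!j) = (i = j)" if "i < k+3" "j < k+3" for i j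
    using nth_eq_iff_index_eq[OF dP] that len by simp
  have ipath0: "is_path V A (map ((!) P) L)"
    if "L \<noteq> []" "distinct L" "set L \<subseteq> {..k+2}" "successively (\<lambda>i j. A (P!i) (P!j)) L" for L
  proof -
    have "inj_on ((!) P) (set L)" unfolding inj_on_def
    proof (intro ballI impI)
      fix a b assume "a \<in> set L" "b \<in> set L" "P!a = P!b"
      thus "a = b" using that(3) inj[of a b] by fastforce
    qed
    moreover have "set (map ((!) P) L) \<subseteq> V" using that(3) PV len by (auto intro!: nth_mem[THEN subsetD[OF PV]])
    ultimately show ?thesis using that unfolding is_path_succ by (auto simp: distinct_map successively_map)
  qed
  have uptp: "is_path V A (map ((!) P) [a..<b])" if "a < b" "b \<le> k+3" for a b
  proof (rule ipath0)
    show "successively (\<lambda>i j. A (P!i) (P!j)) [a..<b]"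
      using successively_mono[OF succ_upt[of a b], of "\<lambda>i j. A (P!i) (P!j)"] fwd that by auto
  qed (use that in auto)
  have nochord: "\<not> A (P!i) (P!j)" if "i+2 \<le> j" "j \<le> k+2" for i j
  proof
    assume a: "A (P!i) (P!j)"
    let ?Q = "map ((!) P) [0..<i+1] @ map ((!) P) [j..<k+3]"
    have "is_path V A ?Q"
      apply (rule path_app)
      using uptp[of 0 "i+1"] uptp[of j "k+3"] that a inj by (auto simp: last_map hd_map)
    moreover have "hd ?Q = u" "last ?Q = v" using u0 vn that
      by (auto simp: hd_append last_append hd_map last_map hd_upt last_upt del: upt_Suc)
    ultimately have "dist V A u v + 1 \<le> length ?Q" by (intro dist_le) (simp add: is_path_from_to_def)
    thus False using that assms(9) by simp
  qed
  have bck: "A (P!j) (P!i)" if "i+2 \<le> j" "j \<le> k+2" for i j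
  proof -
    have "P!i \<in> set P" "P!j \<in> set P" "P!i \<noteq> P!j" using that len inj[of i j] by auto
    hence "adjacent A (P!j) (P!i)" using assms(12) unfolding semicomplete_on_def by (metis (no_types))
    thus ?thesis using nochord[OF that] unfolding adjacent_def by blast
  qed
  have ipath: "is_path V A (map ((!) P) L)"
    if "L \<noteq> []" "distinct L" "set L \<subseteq> {..k+2}" "successively (\<lambda>i j. j = Suc i \<or> j+2 \<le> i) L" for L
  proof (rule ipath0[OF that(1-3)])
    show "successively (\<lambda>i j. A (P!i) (P!j)) L"
    proof (rule successively_mono[OF that(4)])
      fix i j assume "i \<in> set L" "j \<in> set L" and r: "j = Suc i \<or> j+2 \<le> i"
      hence "i \<le> k+2" "j \<le> k+2" using that(3) by auto
      thus "A (P!i) (P!j)" using fwd[of i] bck[of j i] r by auto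
    qed
  qed
  have setm: "set (map ((!) P) L) \<subseteq> set P" if "set L \<subseteq> {..k+2}" for L
    using that len by auto
  show ?thesis
    unfolding Let_def
  proof (intro ballI)
    fix x assume xB: "x \<in> V - (set P \<union> {x \<in> V - set P. no_back A {x} (set P)} \<union> {x \<in> V - set P. no_back A (set P) {x}})"
    hence xV: "x \<in> V" and xP: "x \<notin> set P" by auto
    from xB obtain y1 where y1: "y1 \<in> set P" "A y1 x" unfolding no_back_def by auto
    define In where "In i = A (P!i) x" for i
    define Out where "Out i = A x (P!i)" for i
    have ne: "\<exists>i\<le>k+2. In i"
    proof -
      obtain i where "i < length P" "y1 = P!i" using y1(1) by (auto simp: in_set_conv_nth)
      thus ?thesis using y1(2) len unfolding In_def by (intro exI[of _ i]) auto
    qed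
    have qt: "adjacent A (hd q) (last q)" if "is_path V A q" "length q = k+1" for q
      using assms(5) that unfolding k_quasi_transitive_def by blast
    have QO: "In b \<or> Out b" if o: "Out a" and L: "L \<noteq> [] \<and> distinct L \<and> set L \<subseteq> {..k+2} \<and>
       successively (\<lambda>i j. j = Suc i \<or> j+2 \<le> i) L \<and> length L = k \<and> hd L = a \<and> last L = b" for a b L
    proof -
      have p1: "is_path V A (map ((!) P) L)" using ipath L by blast
      have "is_path V A (x # map ((!) P) L)"
        apply (rule path_cons[OF p1 xV])
        using setm[of L] L xP o unfolding Out_def by (auto simp: hd_map)
      hence "adjacent A (hd (x # map ((!) P) L)) (last (x # map ((!) P) L))" using L by (intro qt) auto
      thus ?thesis using L unfolding In_def Out_def adjacent_def by (auto simp: last_map)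
    qed
    have QI: "In a \<or> Out a" if o: "In b" and L: "L \<noteq> [] \<and> distinct L \<and> set L \<subseteq> {..k+2} \<and>
       successively (\<lambda>i j. j = Suc i \<or> j+2 \<le> i) L \<and> length L = k \<and> hd L = a \<and> last L = b" for a b L
    proof -
      have p1: "is_path V A (map ((!) P) L)" using ipath L by blast
      have "is_path V A (map ((!) P) L @ [x])"
        apply (rule path_snoc[OF p1 xV])
        using setm[of L] L xP o unfolding In_def by (auto simp: last_map)
      hence "adjacent A (hd (map ((!) P) L @ [x])) (last (map ((!) P) L @ [x]))" using L by (intro qt) auto
      thus ?thesis using L unfolding In_def Out_def adjacent_def by (auto simp: hd_map)
    qed
    have C0: "j \<le> i+2" if "i \<le> k+2" "j \<le> k+2" "In i" "Out j" for i j
    proof (rule ccontr)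
      assume "\<not> j \<le> i+2"
      hence ij: "i + 3 \<le> j" by simp
      let ?Q = "map ((!) P) [0..<i+1] @ x # map ((!) P) [j..<k+3]"
      have sj: "set (map ((!) P) [j..<k+3]) \<subseteq> set P" by (rule setm) auto
      have si: "set (map ((!) P) [0..<i+1]) \<subseteq> set P" by (rule setm) (use that in auto)
      have "x \<notin> set (map ((!) P) [j..<k+3])" using sj xP by blast
      have "is_path V A (x # map ((!) P) [j..<k+3])"
        apply (rule path_cons[OF uptp[of j "k+3"] xV])
        using that ij \<open>x \<notin> set (map ((!) P) [j..<k+3])\<close> unfolding Out_def by (auto simp: hd_map hd_upt)
      moreover have pi: "is_path V A (map ((!) P) [0..<i+1])" by (rule uptp) (use that in auto)
      ultimately have "is_path V A ?Q"
        apply (intro path_app[OF pi])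
        using that ij xP inj si unfolding In_def by (auto simp: last_map)
      moreover have "hd ?Q = u" "last ?Q = v" using u0 vn that ij
        by (auto simp: hd_append last_append hd_map last_map hd_upt last_upt del: upt_Suc)
      ultimately have "dist V A u v + 1 \<le> length ?Q" by (intro dist_le) (simp add: is_path_from_to_def)
      thus False using ij that assms(9) by simp
    qed
    have F1: "In (a+k-1) \<or> Out (a+k-1)" if "a+k-1 \<le> k+2" "Out a" for a
      using fw_list[OF that(1) k5] QO[OF that(2)] by blast
    have F2: "In (b-(k-1)) \<or> Out (b-(k-1))" if hb: "b \<le> k+2" "k-1 \<le> b" "In b" for b
    proof -
      have e: "b - (k-1) + k - 1 = b" using that k5 by simp
      obtain L where L: "L \<noteq> [] \<and> distinct L \<and> set L \<subseteq> {..k+2} \<and>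
     successively (\<lambda>i j. j = Suc i \<or> j+2 \<le> i) L \<and> length L = k \<and> hd L = b-(k-1) \<and> last L = b-(k-1)+k-1"
        using fw_list[of "b-(k-1)" k] hb k5 e by auto
      show ?thesis by (rule QI[OF hb(3), of L]) (use L e in simp)
    qed
    have B1: "In b \<or> Out b" if "a \<le> k+2" "b < a" "a \<le> b+4" "Out a" for a b
      using bk_list[OF that(2,3,1) k5] QO[OF that(4)] by blast
    have B2: "In a \<or> Out a" if "a \<le> k+2" "b < a" "a \<le> b+4" "In b" for a b
      using bk_list[OF that(2,3,1) k5] QI[OF that(4)] by blast
    have cmb: "(\<forall>i\<le>k+2. In i \<or> Out i) \<or> (\<exists>t s. 4 \<le> t+1 \<and> t+1 < s \<and> s \<le> k-1 \<and>
     (\<forall>l. s \<le> l \<and> l \<le> k+2 \<longrightarrow> In l \<and> \<not> Out l) \<and> (\<forall>l\<le>t. Out l \<and> \<not> In l))"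
      by (rule comb[OF k5 C0 F1 F2 B1 B2 ne])
    show "(\<forall>y\<in>set P. adjacent A x y) \<or>
              (\<exists>t s. 4 \<le> t + 1 \<and> t + 1 < s \<and> s \<le> k - 1 \<and>
                 strictly_dominates A {P ! i | i. s \<le> i \<and> i \<le> k + 2} {x} \<and>
                 strictly_dominates A {x} {P ! i | i. i \<le> t})"
    proof (cases "\<forall>i\<le>k+2. In i \<or> Out i")
      case True
      have "\<forall>y\<in>set P. adjacent A x y"
      proof
        fix y assume "y \<in> set P"
        then obtain i where "i < length P" "y = P!i" by (auto simp: in_set_conv_nth)
        hence "i \<le> k+2" "y = P!i" using len by auto
        thus "adjacent A x y" using True unfolding In_def Out_def adjacent_def by blast
      qed
      thus ?thesis by blast
    next
      case False
      then obtain t s where ts: "4 \<le> t+1" "t+1 < s" "s \<le> k-1"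
        "\<forall>l. s \<le> l \<and> l \<le> k+2 \<longrightarrow> In l \<and> \<not> Out l" "\<forall>l\<le>t. Out l \<and> \<not> In l"
        using cmb by blast
      have "strictly_dominates A {P ! i | i. s \<le> i \<and> i \<le> k + 2} {x}"
        using ts(4) unfolding strictly_dominates_def dominates_def no_back_def In_def Out_def by auto
      moreover have "strictly_dominates A {x} {P ! i | i. i \<le> t}"
        using ts(5) unfolding strictly_dominates_def dominates_def no_back_def In_def Out_def by auto
      ultimately show ?thesis using ts(1-3) by blast
    qed
  qed
qed

end
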